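(* Fix $p\in(0,1)$, put $q=1-p$, let $T_n$ be the completion time of the one-set clumsy coupon collector on $n$ types started from the empty collection, and let $Y_n:=pq^nT_n$. There are constants $C,c\in(0,\infty)$, depending only on $p$, such that $\mathbb P(Y_n>x)\le Ce^{-cx}$ for all $x\ge0$ and all sufficiently large $n$. Consequently, for every fixed $r\ge1$, $\mathbb EY_n^r\to\mathbb EZ^r=r!$ where $Z\sim\mathrm{Exp}(1)$. In particular $\mathbb ET_n\sim 1/(pq^n)$ and $\mathrm{Var}(T_n)\sim 1/(p^2q^{2n})$.
   Context: One-set clumsy coupon collector: the state is $X(t)\in\{0,1\}^n$ with $X(0)=(0,\dots,0)$. At each step one type $i$ is chosen uniformly from $[n]$, independently of the past, and $X_i$ is set to $1$ with probability $q$ and to $0$ with probability $p$; other coordinates are unchanged. $T_n=\inf\{t\ge0:X(t)=(1,\dots,1)\}$. *)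

theory Defs
  imports "HOL-Probability.Probability" "HOL-Library.Landau_Symbols"
begin

text \<open>States of the one-set clumsy coupon collector on n types: functions
  nat \<Rightarrow> bool, where coordinate i (for i < n) records X_i = 1; coordinates
  i \<ge> n are irrelevant (always False).  q = 1 - p.\<close>

definition full_state :: "nat \<Rightarrow> (nat \<Rightarrow> bool) \<Rightarrow> bool" where
  "full_state n x \<longleftrightarrow> (\<forall>i<n. x i)"

definition cc_step :: "nat \<Rightarrow> real \<Rightarrow> (nat \<Rightarrow> bool) \<Rightarrow> (nat \<Rightarrow> bool) pmf" where
  "cc_step n p x =
     pmf_of_set {..<n} \<bind> (\<lambda>i. bernoulli_pmf (1 - p) \<bind> (\<lambda>b. return_pmf (x(i := b))))"

text \<open>The chain stopped at the completion time T_n: once all types are collected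
  it stays put.  Its law at time t is obtained by iterating the stopped kernel from
  X(0) = (0,...,0).\<close>
definition cc_stopped_step :: "nat \<Rightarrow> real \<Rightarrow> (nat \<Rightarrow> bool) \<Rightarrow> (nat \<Rightarrow> bool) pmf" where
  "cc_stopped_step n p x = (if full_state n x then return_pmf x else cc_step n p x)"

definition cc_stopped_law :: "nat \<Rightarrow> real \<Rightarrow> nat \<Rightarrow> (nat \<Rightarrow> bool) pmf" where
  "cc_stopped_law n p t =
     ((\<lambda>M. M \<bind> cc_stopped_step n p) ^^ t) (return_pmf (\<lambda>_. False))"

text \<open>P(T_n \<le> t) = P(stopped chain is full at time t).\<close>
definition cc_cdf :: "nat \<Rightarrow> real \<Rightarrow> nat \<Rightarrow> real" where
  "cc_cdf n p t = measure_pmf.prob (cc_stopped_law n p t) {x. full_state n x}"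

definition cc_prob :: "nat \<Rightarrow> real \<Rightarrow> nat \<Rightarrow> real" where
  "cc_prob n p t = (if t = 0 then cc_cdf n p 0 else cc_cdf n p t - cc_cdf n p (t - 1))"

definition T_law :: "nat \<Rightarrow> real \<Rightarrow> nat measure" where
  "T_law n p = density (count_space UNIV) (\<lambda>t. ennreal (cc_prob n p t))"

definition Y_scale :: "nat \<Rightarrow> real \<Rightarrow> nat \<Rightarrow> real" where
  "Y_scale n p t = p * (1 - p) ^ n * real t"

end

theory Submission
  imports Defs
begin

lemma prob_bind_pmf:
  "measure_pmf.prob (bind_pmf M f) X = measure_pmf.expectation M (\<lambda>x. measure_pmf.prob (f x) X)"
  unfolding measure_pmf_bind
  by (subst measure_pmf.measure_bind[where N="count_space UNIV"]) (auto simp: measure_subprob)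

definition cnt :: "nat \<Rightarrow> (nat \<Rightarrow> bool) \<Rightarrow> nat" where
  "cnt n x = card {i. i < n \<and> x i}"

lemma cnt_le: "cnt n x \<le> n"
proof -
  have "{i. i < n \<and> x i} \<subseteq> {..<n}" by auto
  then show ?thesis unfolding cnt_def using card_mono[of "{..<n}"] by fastforce
qed

lemma full_iff_cnt: "full_state n x \<longleftrightarrow> cnt n x = n"
proof
  assume "full_state n x"
  then have "{i. i < n \<and> x i} = {..<n}" by (auto simp: full_state_def)
  then show "cnt n x = n" by (simp add: cnt_def)
next
  assume h: "cnt n x = n"
  have "{i. i < n \<and> x i} = {..<n}"
    using h unfolding cnt_def by (intro card_subset_eq) auto
  then show "full_state n x" by (auto simp: full_state_def)
qed

lemma cnt_upd:
  assumes "i < n"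
  shows "cnt n (x(i:=b)) = (if b then (if x i then cnt n x else Suc (cnt n x))
                             else (if x i then cnt n x - 1 else cnt n x))"
proof -
  let ?S = "{j. j < n \<and> x j}"
  have fin: "finite ?S" by simp
  show ?thesis
  proof (cases b)
    case True
    then have "{j. j < n \<and> (x(i:=b)) j} = insert i ?S" using assms by auto
    then show ?thesis using True fin assms by (simp add: cnt_def card_insert_if)
  next
    case False
    then have "{j. j < n \<and> (x(i:=b)) j} = ?S - {i}" using assms by auto
    then show ?thesis using False fin assms by (simp add: cnt_def card_Diff_singleton_if)
  qed
qed

lemma sum_if_cnt:
  fixes A B :: real
  shows "(\<Sum>i<n. if x i then A else B) = real (cnt n x) * A + real (n - cnt n x) * B"
proof -
  have e1: "{..<n} \<inter> {i. x i} = {i. i < n \<and> x i}" by auto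
  have e2: "{..<n} \<inter> - {i. x i} = {..<n} - {i. i < n \<and> x i}" by auto
  have "card ({..<n} - {i. i < n \<and> x i}) = n - cnt n x"
    unfolding cnt_def by (subst card_Diff_subset) auto
  then show ?thesis
    by (simp add: sum.If_cases e1 e2 cnt_def)
qed


locale ccb =
  fixes n :: nat and p :: real
  assumes n1: "1 \<le> n" and p0: "0 < p" and p1: "p < 1"
begin

definition Qop :: "(nat \<Rightarrow> real) \<Rightarrow> nat \<Rightarrow> real" where
  "Qop f k = (if k < n then (real k * ((1-p) * f k + p * f (k-1))
       + real (n-k) * ((1-p) * f (Suc k) + p * f k)) / real n else 0)"

definition onev :: "nat \<Rightarrow> real" where
  "onev k = (if k < n then 1 else 0)"

definition w :: "nat \<Rightarrow> nat \<Rightarrow> real" where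
  "w t = (Qop ^^ t) onev"

lemma w_0: "w 0 = onev" by (simp add: w_def)
lemma w_Suc: "w (Suc t) = Qop (w t)" by (simp add: w_def)

lemma w_ge_n: "n \<le> k \<Longrightarrow> w t k = 0"
  by (cases t) (auto simp: w_0 w_Suc onev_def Qop_def)

definition FF :: "(nat \<Rightarrow> bool) pmf \<Rightarrow> (nat \<Rightarrow> bool) pmf" where
  "FF M = M \<bind> cc_stopped_step n p"

lemma FF_funpow_bind: "(FF ^^ t) M = M \<bind> (\<lambda>y. (FF ^^ t) (return_pmf y))"
proof (induction t arbitrary: M)
  case 0
  then show ?case by (simp add: bind_return_pmf')
next
  case (Suc t)
  have "(FF ^^ Suc t) M = FF ((FF ^^ t) M)" by simp
  also have "\<dots> = (M \<bind> (\<lambda>y. (FF ^^ t) (return_pmf y))) \<bind> cc_stopped_step n p"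
    by (subst Suc.IH[of M, symmetric]) (simp add: FF_def)
  also have "\<dots> = M \<bind> (\<lambda>y. (FF ^^ Suc t) (return_pmf y))"
    by (simp add: bind_assoc_pmf FF_def)
  finally show ?case .
qed

lemma u_eq:
  "measure_pmf.prob ((FF ^^ t) (return_pmf x)) {y. \<not> full_state n y} = w t (cnt n x)"
proof (induction t arbitrary: x)
  case 0
  show ?case using cnt_le[of n x] full_iff_cnt[of n x]
    by (auto simp: w_0 onev_def indicator_def)
next
  case (Suc t)
  let ?A = "{y. \<not> full_state n y}"
  let ?G = "\<lambda>y. (FF ^^ t) (return_pmf y)"
  have e1: "(FF ^^ Suc t) (return_pmf x) = cc_stopped_step n p x \<bind> ?G"
    by (simp only: funpow_Suc_right o_apply) (simp add: FF_def bind_return_pmf FF_funpow_bind[of t "cc_stopped_step n p x"])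
  show ?case
  proof (cases "full_state n x")
    case True
    then have "cnt n x = n" using full_iff_cnt by blast
    then show ?thesis using True Suc
      unfolding e1 by (simp add: cc_stopped_step_def bind_return_pmf w_Suc Qop_def w_ge_n)
  next
    case False
    then have kn: "cnt n x < n" using full_iff_cnt cnt_le[of n x] by (metis le_neq_implies_less)
    have nne: "{..<n} \<noteq> {}" using n1 by (auto simp: lessThan_empty_iff)
    have "measure_pmf.prob ((FF ^^ Suc t) (return_pmf x)) ?A
       = measure_pmf.prob (pmf_of_set {..<n} \<bind> (\<lambda>i. bernoulli_pmf (1-p) \<bind> (\<lambda>b. ?G (x(i:=b))))) ?A"
      using False unfolding e1 by (simp add: cc_stopped_step_def cc_step_def bind_assoc_pmf bind_return_pmf)
    also have "\<dots> = (\<Sum>i<n. (1-p) * w t (cnt n (x(i:=True))) + p * w t (cnt n (x(i:=False)))) / real n"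
      using p0 p1 nne by (simp add: prob_bind_pmf integral_pmf_of_set Suc) (auto intro!: sum.cong simp: fun_upd_def mult.commute)
    also have "\<dots> = (\<Sum>i<n. if x i then (1-p) * w t (cnt n x) + p * w t (cnt n x - 1)
                          else (1-p) * w t (Suc (cnt n x)) + p * w t (cnt n x)) / real n"
      by (intro arg_cong[where f="\<lambda>s. s / real n"] sum.cong) (auto simp: cnt_upd)
    also have "\<dots> = w (Suc t) (cnt n x)"
      by (simp only: sum_if_cnt) (simp add: w_Suc Qop_def kn)
    finally show ?thesis .
  qed
qed

lemma cdf_eq: "cc_cdf n p t = 1 - w t 0"
proof -
  have "cnt n (\<lambda>_. False) = 0" by (simp add: cnt_def)
  moreover have "cc_stopped_law n p t = (FF ^^ t) (return_pmf (\<lambda>_. False))"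
    by (simp add: cc_stopped_law_def FF_def[abs_def])
  moreover have "{x. full_state n x} = UNIV - {y. \<not> full_state n y}" by auto
  ultimately show ?thesis
    unfolding cc_cdf_def using u_eq[of t "\<lambda>_. False"]
    using measure_pmf.prob_compl[of "{y. \<not> full_state n y}" "(FF ^^ t) (return_pmf (\<lambda>_. False))"]
    by simp
qed

end

context ccb begin

lemma Qop_mono: "(\<And>k. f k \<le> g k) \<Longrightarrow> Qop f k \<le> Qop g k"
proof -
  assume fg: "\<And>k. f k \<le> g k"
  show ?thesis
  proof (cases "k < n")
    case True
    have a: "real k * ((1-p) * f k + p * f (k-1)) \<le> real k * ((1-p) * g k + p * g (k-1))"
      using fg p0 p1 by (intro mult_left_mono add_mono) auto
    have b: "real (n-k) * ((1-p) * f (Suc k) + p * f k) \<le> real (n-k) * ((1-p) * g (Suc k) + p * g k)"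
      using fg p0 p1 by (intro mult_left_mono add_mono) auto
    show ?thesis unfolding Qop_def if_P[OF True] using n1 by (intro divide_right_mono add_mono a b) auto
  qed (simp add: Qop_def)
qed

lemma Qop_lin: "Qop (\<lambda>k. c * f k + d * g k) k = c * Qop f k + d * Qop g k"
  by (simp add: Qop_def field_simps)

lemma Qop_scale: "Qop (\<lambda>k. c * f k) k = c * Qop f k"
  using Qop_lin[of c f 0 f k] by simp

lemma Qop_add: "Qop (\<lambda>k. f k + g k) k = Qop f k + Qop g k"
  using Qop_lin[of 1 f 1 g k] by simp

lemma Qop_diff: "Qop (\<lambda>k. f k - g k) k = Qop f k - Qop g k"
  using Qop_lin[of 1 f "-1" g k] by simp

lemma Qop_zero: "Qop (\<lambda>k. 0) k = 0"
  using Qop_scale[of 0 "\<lambda>_. 0" k] by simp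

lemma Qop_sum: "Qop (\<lambda>k. \<Sum>t\<in>A. g t k) k = (\<Sum>t\<in>A. Qop (g t) k)"
proof (induction A rule: infinite_finite_induct)
  case (infinite A)
  then show ?case by (simp add: Qop_zero)
next
  case empty
  then show ?case by (simp add: Qop_zero)
next
  case (insert x F)
  then show ?case by (simp add: Qop_add)
qed

lemma Qop_suminf:
  assumes "\<And>k. summable (\<lambda>t. g t k)"
  shows "Qop (\<lambda>k. \<Sum>t. g t k) k = (\<Sum>t. Qop (g t) k)"
proof (cases "k < n")
  case True
  let ?c1 = "real k * (1-p) / real n" and ?c2 = "real k * p / real n"
  let ?c3 = "real (n-k) * (1-p) / real n" and ?c4 = "real (n-k) * p / real n"
  have e: "\<And>f. Qop f k = ?c1 * f k + ?c2 * f (k-1) + ?c3 * f (Suc k) + ?c4 * f k"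
    using True by (simp add: Qop_def field_simps)
  have s: "(\<lambda>t. ?c1 * g t k + ?c2 * g t (k-1) + ?c3 * g t (Suc k) + ?c4 * g t k) sums
      (?c1 * (\<Sum>t. g t k) + ?c2 * (\<Sum>t. g t (k-1)) + ?c3 * (\<Sum>t. g t (Suc k)) + ?c4 * (\<Sum>t. g t k))"
    using assms by (intro sums_add sums_mult summable_sums) auto
  show ?thesis unfolding e using sums_unique[OF s] by simp
qed (simp add: Qop_def)

lemma Qpow_mono: "(\<And>k. f k \<le> g k) \<Longrightarrow> (Qop ^^ N) f k \<le> (Qop ^^ N) g k"
  by (induction N arbitrary: k) (auto intro: Qop_mono)

lemma Qpow_scale: "(Qop ^^ N) (\<lambda>k. c * f k) = (\<lambda>k. c * (Qop ^^ N) f k)"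
  by (induction N) (auto simp: Qop_scale[symmetric])

lemma Qpow_diff: "(Qop ^^ N) (\<lambda>k. f k - g k) = (\<lambda>k. (Qop ^^ N) f k - (Qop ^^ N) g k)"
  by (induction N) (auto simp: Qop_diff[symmetric])

lemma Qop_nonneg: "(\<And>k. 0 \<le> f k) \<Longrightarrow> 0 \<le> Qop f k"
  using Qop_mono[of "\<lambda>_. 0" f k] by (simp add: Qop_zero)

lemma Qop_onev: "Qop onev k \<le> onev k"
proof (cases "k < n")
  case True
  have "real k \<le> real n" using True by simp
  then have "(1-p) * real k \<le> (1-p) * real n" using p1 by (intro mult_left_mono) auto
  then show ?thesis using True p0 p1 by (auto simp: Qop_def onev_def field_simps)
qed (simp add: Qop_def onev_def)

lemma w_nonneg: "0 \<le> w t k"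
  by (induction t arbitrary: k) (auto simp: w_0 w_Suc onev_def intro: Qop_nonneg)

lemma w_add: "w (t + s) = (Qop ^^ t) (w s)"
  by (simp add: w_def funpow_add)

lemma w_Suc_le: "w (Suc t) k \<le> w t k"
proof -
  have "w (Suc t) = (Qop ^^ t) (Qop onev)" by (simp only: w_def funpow_Suc_right comp_apply)
  then show ?thesis using Qpow_mono[of "Qop onev" onev t k, OF Qop_onev] by (simp add: w_def)
qed

lemma w_antimono: "t \<le> t' \<Longrightarrow> w t' k \<le> w t k"
  by (induction t' rule: dec_induct) (auto intro: order_trans[OF w_Suc_le])

lemma w_le1: "w t k \<le> onev k"
  using w_antimono[of 0 t k] by (simp add: w_0)

end

context ccb begin

definition aa :: "nat \<Rightarrow> real" where "aa k = (1-p) * (real n - real k) / real n"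
definition bb :: "nat \<Rightarrow> real" where "bb k = p * real k / real n"
definition pi :: "nat \<Rightarrow> real" where "pi j = real (n choose j) * (1-p)^j * p^(n-j)"
definition SS :: "nat \<Rightarrow> real" where "SS j = (\<Sum>i\<le>j. pi i)"
definition hh :: "nat \<Rightarrow> real" where "hh j = SS j / (pi j * aa j)"
definition ff :: "nat \<Rightarrow> real" where "ff k = (\<Sum>j\<in>{k..<n}. hh j)"

lemma npos: "0 < real n" using n1 by simp

lemma Qop_alt: "k < n \<Longrightarrow> Qop f k = aa k * f (Suc k) + bb k * f (k-1) + (1 - aa k - bb k) * f k"
  using npos by (simp add: Qop_def aa_def bb_def of_nat_diff field_simps)

lemma pi_pos: "j \<le> n \<Longrightarrow> 0 < pi j"
  using p0 p1 by (simp add: pi_def)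

lemma aa_pos: "j < n \<Longrightarrow> 0 < aa j"
  using p0 p1 npos by (simp add: aa_def)

lemma bb_nonneg: "0 \<le> bb j"
  using p0 npos by (simp add: bb_def)

lemma bb_pos: "0 < j \<Longrightarrow> 0 < bb j"
  using p0 npos by (simp add: bb_def)

lemma pi_aa: "j < n \<Longrightarrow> pi j * aa j = real (n - 1 choose j) * (1-p)^(Suc j) * p^(n-j)"
proof -
  assume j: "j < n"
  have c: "real (n - j) * real (n choose j) = real n * real (n - 1 choose j)"
    using binomial_absorb_comp[of n j] by (metis of_nat_mult)
  have "pi j * aa j = (real (n-j) * real (n choose j)) * (1-p)^(Suc j) * p^(n-j) / real n"
    using j by (simp add: pi_def aa_def of_nat_diff field_simps)
  also have "\<dots> = real (n - 1 choose j) * (1-p)^(Suc j) * p^(n-j)"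
    unfolding c using npos by (simp add: field_simps)
  finally show ?thesis .
qed

lemma detailed_balance: "j < n \<Longrightarrow> pi j * aa j = pi (Suc j) * bb (Suc j)"
proof -
  assume j: "j < n"
  have c: "real (Suc j) * real (n choose Suc j) = real n * real (n - 1 choose j)"
    using binomial_absorption[of j n] by (metis of_nat_mult)
  have "n - j = Suc (n - Suc j)" using j by simp
  then have pe: "p^(n-j) = p * p^(n - Suc j)" by simp
  have "pi (Suc j) * bb (Suc j) = (real (Suc j) * real (n choose Suc j)) * (1-p)^(Suc j) * p^(n-j) / real n"
    by (simp add: pi_def bb_def pe field_simps)
  also have "\<dots> = real (n - 1 choose j) * (1-p)^(Suc j) * p^(n-j)"
    unfolding c using npos by (simp add: field_simps)
  finally show ?thesis using pi_aa[OF j] by simp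
qed

lemma hh_rec: "k < n \<Longrightarrow> aa k * hh k = 1 + bb k * hh (k-1)"
proof (cases k)
  case 0
  assume "k < n"
  then show ?thesis using 0 pi_pos[of 0] aa_pos[of 0] by (simp add: hh_def SS_def bb_def)
next
  case (Suc j)
  assume k: "k < n"
  have pa: "0 < pi k" "0 < aa k" "0 < bb k" "0 < pi j" "0 < aa j"
    using k Suc pi_pos aa_pos bb_pos by auto
  have db: "pi j * aa j = pi k * bb k" using detailed_balance[of j] Suc k by simp
  have "aa k * hh k = SS k / pi k" using pa by (simp add: hh_def)
  also have "\<dots> = 1 + SS j / pi k" using pa Suc by (simp add: SS_def field_simps)
  also have "SS j / pi k = bb k * hh j"
    unfolding hh_def db using pa by (simp add: field_simps)
  finally show ?thesis using Suc by simp
qed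

lemma SS_nonneg: "j \<le> n \<Longrightarrow> 0 \<le> SS j"
  unfolding SS_def using pi_pos by (intro sum_nonneg) (auto intro: less_imp_le)

lemma hh_nonneg: "j < n \<Longrightarrow> 0 \<le> hh j"
  using SS_nonneg[of j] pi_pos[of j] aa_pos[of j] by (simp add: hh_def)

lemma ff_ge_n: "n \<le> k \<Longrightarrow> ff k = 0"
  by (simp add: ff_def)

lemma ff_Suc: "k < n \<Longrightarrow> ff (Suc k) = ff k - hh k"
  by (simp add: ff_def sum.atLeast_Suc_lessThan)

lemma ff_poisson: "ff k = onev k + Qop ff k"
proof (cases "k < n")
  case True
  have "Qop ff k = aa k * ff (Suc k) + bb k * ff (k-1) + (1 - aa k - bb k) * ff k"
    using Qop_alt[OF True] .
  also have "\<dots> = ff k - aa k * hh k + bb k * hh (k-1)"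
  proof (cases k)
    case 0
    then show ?thesis using True by (simp add: ff_Suc bb_def algebra_simps)
  next
    case (Suc j)
    then have "ff j = ff k + hh j" using ff_Suc[of j] True by simp
    then show ?thesis using True Suc by (simp add: ff_Suc algebra_simps)
  qed
  also have "\<dots> = ff k - 1" using hh_rec[OF True] by simp
  finally show ?thesis using True by (simp add: onev_def)
qed (simp add: ff_ge_n onev_def Qop_def)

lemma ff_nonneg: "0 \<le> ff k"
  unfolding ff_def using hh_nonneg by (intro sum_nonneg) auto

lemma ff_antimono: "k \<le> k' \<Longrightarrow> ff k' \<le> ff k"
  unfolding ff_def using hh_nonneg by (intro sum_mono2) auto

lemma ff_le_ff0: "ff k \<le> ff 0" using ff_antimono[of 0 k] by simp

lemma ff_ge_last: "k < n \<Longrightarrow> hh (n-1) \<le> ff k"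
  unfolding ff_def using hh_nonneg by (intro member_le_sum) auto

lemma ff0_ge1: "1 \<le> ff 0"
  using ff_poisson[of 0] Qop_nonneg[of ff 0, OF ff_nonneg] n1 by (simp add: onev_def)

lemma pi_sum: "(\<Sum>i\<le>n. pi i) = 1"
  using binomial_ring[of "1-p" p n] by (simp add: pi_def mult.assoc)

lemma SS_le1: "j \<le> n \<Longrightarrow> SS j \<le> 1"
proof -
  assume "j \<le> n"
  then have "SS j \<le> (\<Sum>i\<le>n. pi i)" unfolding SS_def
    using pi_pos by (intro sum_mono2) (auto intro: less_imp_le)
  then show ?thesis using pi_sum by simp
qed

lemma SS_last: "SS (n-1) = 1 - (1-p)^n"
proof -
  have "(\<Sum>i\<le>n. pi i) = SS (n-1) + pi n"
    using n1 unfolding SS_def by (metis Suc_diff_1 less_le_trans zero_less_one sum.atMost_Suc)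
  then show ?thesis using pi_sum by (simp add: pi_def)
qed

lemma hh_last: "hh (n-1) = (1 - (1-p)^n) / (p * (1-p)^n)"
proof -
  have "pi (n-1) * aa (n-1) = p * (1-p)^n"
    using pi_aa[of "n-1"] n1 by simp
  then show ?thesis unfolding hh_def SS_last by simp
qed

lemma hh_le: "j < n \<Longrightarrow> hh j \<le> 1 / (pi j * aa j)"
  using SS_le1[of j] pi_pos[of j] aa_pos[of j] by (simp add: hh_def divide_right_mono)

lemma hh_mono_step: "Suc k < n \<Longrightarrow> hh k * (aa k - bb k) \<le> 1 \<and> hh k \<le> hh (Suc k)"
proof (induction k)
  case 0
  have h0: "hh 0 * (aa 0 - bb 0) = 1" using hh_rec[of 0] 0 by (simp add: bb_def mult.commute)
  have "aa (Suc 0) - bb (Suc 0) \<le> aa 0 - bb 0" using p0 p1 npos by (simp add: aa_def bb_def field_simps)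
  then have "hh 0 * (aa (Suc 0) - bb (Suc 0)) \<le> 1" using h0 hh_nonneg[of 0] 0
    by (metis mult_left_mono order.trans less_trans zero_less_Suc order_refl)
  then have "aa 1 * hh 0 \<le> 1 + bb 1 * hh 0" by (simp add: algebra_simps)
  then have "aa 1 * hh 0 \<le> aa 1 * hh 1" using hh_rec[of 1] 0 by simp
  then show ?case using h0 aa_pos[of 1] 0 by simp
next
  case (Suc k)
  then have ih: "hh k * (aa k - bb k) \<le> 1" "hh k \<le> hh (Suc k)" by auto
  have r: "aa (Suc k) * hh (Suc k) = 1 + bb (Suc k) * hh k" using hh_rec[of "Suc k"] Suc.prems by simp
  have i1: "hh (Suc k) * (aa (Suc k) - bb (Suc k)) \<le> 1"
  proof -
    have "bb (Suc k) * hh k \<le> bb (Suc k) * hh (Suc k)"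
      using ih(2) bb_nonneg[of "Suc k"] by (rule mult_left_mono)
    then show ?thesis using r by (simp add: algebra_simps)
  qed
  have "aa (Suc (Suc k)) - bb (Suc (Suc k)) \<le> aa (Suc k) - bb (Suc k)"
    using p0 p1 npos by (simp add: aa_def bb_def field_simps)
  then have "hh (Suc k) * (aa (Suc (Suc k)) - bb (Suc (Suc k))) \<le> 1"
    using i1 hh_nonneg[of "Suc k"] Suc.prems
    by (metis mult_left_mono order.trans Suc_lessD)
  then have "aa (Suc (Suc k)) * hh (Suc k) \<le> aa (Suc (Suc k)) * hh (Suc (Suc k))"
    using hh_rec[of "Suc (Suc k)"] Suc.prems by (simp add: algebra_simps)
  then show ?case using i1 aa_pos[of "Suc (Suc k)"] Suc.prems by simp
qed

lemma hh_mono: "j \<le> j' \<Longrightarrow> j' < n \<Longrightarrow> hh j \<le> hh j'"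
proof (induction j' rule: dec_induct)
  case base then show ?case by simp
next
  case (step m)
  then show ?case using hh_mono_step[of m] by auto
qed

end

lemma aux_e1:
  fixes p q :: real assumes "0 < p" "0 < q"
  shows "p * q^(m+3) * (1 / (real (m+2) * q^(m+2) * p^2)) = q / ((real (m+3) - 1) * p)"
proof -
  have g: "\<And>Q N :: real. 0 < Q \<Longrightarrow> 0 < N \<Longrightarrow> p * (Q * q) * (1 / (N * Q * p^2)) = q / (N * p)"
    using assms by (simp add: field_simps power2_eq_square)
  have "q^(m+3) = q^(m+2) * q" by (simp add: numeral_eq_Suc)
  moreover have "real (m+3) - 1 = real (m+2)" by simp
  ultimately show ?thesis using g[of "q^(m+2)" "real (m+2)"] assms by simp
qed

lemma aux_e0:
  fixes p q C :: real assumes "0 < p" "0 < q" "0 < C"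
  shows "p * q^(m+3) * (real (m+1) * (1 / (C * q^(m+1) * p^3))) = real (m+1) * q^2 / (C * p^2)"
proof -
  have g: "\<And>Q :: real. 0 < Q \<Longrightarrow> p * (Q * q^2) * (real (m+1) * (1 / (C * Q * p^3))) = real (m+1) * q^2 / (C * p^2)"
    using assms by (simp add: field_simps power2_eq_square power3_eq_cube)
  have "q^(m+3) = q^(m+1) * q^2" by (simp add: numeral_eq_Suc power2_eq_square)
  then show ?thesis using g[of "q^(m+1)"] assms by simp
qed

context ccb begin

lemma ff0_upper:
  assumes n3: "3 \<le> n"
  shows "p * (1-p)^n * ff 0 \<le> 1 - (1-p)^n + (1-p) / ((real n - 1) * p) + 4 * (1-p)^2 / ((real n - 1) * p^2)"
proof -
  obtain m where m: "n = m + 3" using n3 by (metis add.commute le_Suc_ex)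
  let ?q = "1 - p"
  let ?e = "p * ?q^n"
  have q0: "0 < ?q" using p1 by simp
  have e0: "0 < ?e" using p0 q0 by simp
  have rng: "{..<n} = {..<m+3}" using m by simp
  have "ff 0 = (\<Sum>j<m+3. hh j)" unfolding ff_def atLeast0LessThan rng ..
  also have "\<dots> = (\<Sum>j<m+1. hh j) + hh (m+1) + hh (m+2)" by (simp add: numeral_3_eq_3)
  finally have f0: "ff 0 = (\<Sum>j<m+1. hh j) + hh (m+1) + hh (m+2)" .
  have s1: "(\<Sum>j<m+1. hh j) \<le> real (m+1) * hh m"
  proof -
    have "(\<Sum>j<m+1. hh j) \<le> (\<Sum>j<m+1. hh m)"
      using m by (intro sum_mono hh_mono) auto
    then show ?thesis by simp
  qed
  have pa1: "pi (m+1) * aa (m+1) = real (m+2) * ?q^(m+2) * p^2"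
    using pi_aa[of "m+1"] m by (simp add: numeral_eq_Suc)
  have Cge: "(real (m+2) / 2)^2 \<le> real (m+2 choose m)"
  proof -
    have "m + 2 choose m = m + 2 choose 2" using binomial_symmetric[of m "m+2"] by simp
    then show ?thesis using binomial_ge_n_over_k_pow_k[of 2 "m+2", where 'a=real] by simp
  qed
  have Cpos: "0 < real (m+2 choose m)" by simp
  have pa0: "pi m * aa m = real (m+2 choose m) * ?q^(m+1) * p^3"
    using pi_aa[of m] m by (simp add: numeral_eq_Suc)
  have h2: "?e * hh (m+2) = 1 - ?q^n"
    using hh_last m e0 p0 q0 by (simp add: numeral_eq_Suc)
  have h1: "?e * hh (m+1) \<le> ?q / ((real n - 1) * p)"
  proof -
    have "?e * hh (m+1) \<le> ?e * (1 / (pi (m+1) * aa (m+1)))"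
      using hh_le[of "m+1"] m e0 by (intro mult_left_mono) auto
    also have "\<dots> = ?q / ((real n - 1) * p)"
      unfolding pa1 using aux_e1[OF p0 q0, of m] m by simp
    finally show ?thesis .
  qed
  have h0: "?e * (real (m+1) * hh m) \<le> 4 * ?q^2 / ((real n - 1) * p^2)"
  proof -
    have "?e * (real (m+1) * hh m) \<le> ?e * (real (m+1) * (1 / (pi m * aa m)))"
      using hh_le[of m] m e0 by (intro mult_left_mono) auto
    also have "\<dots> = real (m+1) * ?q^2 / (real (m+2 choose m) * p^2)"
      unfolding pa0 using aux_e0[OF p0 q0 Cpos] m by simp
    also have "\<dots> \<le> real (m+1) * ?q^2 / ((real (m+2) / 2)^2 * p^2)"
      using Cge p0 q0 by (intro divide_left_mono mult_right_mono mult_pos_pos) auto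
    also have "\<dots> \<le> 4 * ?q^2 / ((real n - 1) * p^2)"
    proof -
      have "real (m+1) * ?q^2 / ((real (m+2) / 2)^2 * p^2) = 4 * ?q^2 * real (m+1) / ((real (m+2))^2 * p^2)"
        by (simp add: field_simps power2_eq_square)
      also have "\<dots> \<le> 4 * ?q^2 * real (m+2) / ((real (m+2))^2 * p^2)"
        using p0 q0 by (intro divide_right_mono mult_left_mono) auto
      also have "\<dots> = 4 * ?q^2 / (real (m+2) * p^2)"
        by (simp add: power2_eq_square del: of_nat_add)
      also have "\<dots> = 4 * ?q^2 / ((real n - 1) * p^2)"
        using m by simp
      finally show ?thesis .
    qed
    finally show ?thesis .
  qed
  have "?e * ff 0 = ?e * (\<Sum>j<m+1. hh j) + ?e * hh (m+1) + ?e * hh (m+2)"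
    unfolding f0 by (simp add: algebra_simps)
  also have "\<dots> \<le> ?e * (real (m+1) * hh m) + ?e * hh (m+1) + ?e * hh (m+2)"
    using mult_left_mono[OF s1 less_imp_le[OF e0]] by simp
  finally show ?thesis using h0 h1 h2 by simp
qed

end

context ccb begin

definition Bp :: "nat \<Rightarrow> nat \<Rightarrow> nat \<Rightarrow> real" where
  "Bp r N k = (\<Sum>t<N. real (t choose r) * w t k)"

definition B :: "nat \<Rightarrow> nat \<Rightarrow> real" where
  "B r k = (\<Sum>t. real (t choose r) * w t k)"

lemma Qop_lincomb: "Qop (\<lambda>k. \<Sum>t<N. c t * g t k) k = (\<Sum>t<N. c t * Qop (g t) k)"
  by (simp add: Qop_sum Qop_scale)

lemma Bp_rec0: "Bp 0 (Suc N) k = onev k + Qop (Bp 0 N) k"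
proof -
  have "Bp 0 (Suc N) k = w 0 k + (\<Sum>t<N. w (Suc t) k)"
    unfolding Bp_def sum.lessThan_Suc_shift by simp
  also have "\<dots> = onev k + Qop (Bp 0 N) k"
    using Qop_lincomb[of "\<lambda>_. 1" w N k] by (simp add: w_0 w_Suc Bp_def[abs_def])
  finally show ?thesis .
qed

lemma Bp_recS: "Bp (Suc r) (Suc N) k = Qop (Bp (Suc r) N) k + Qop (Bp r N) k"
proof -
  have "Bp (Suc r) (Suc N) k = (\<Sum>t<N. real (Suc t choose Suc r) * w (Suc t) k)"
    unfolding Bp_def sum.lessThan_Suc_shift by simp
  also have "\<dots> = (\<Sum>t<N. real (t choose Suc r) * Qop (w t) k) + (\<Sum>t<N. real (t choose r) * Qop (w t) k)"
    by (simp add: w_Suc algebra_simps sum.distrib)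
  also have "\<dots> = Qop (Bp (Suc r) N) k + Qop (Bp r N) k"
    unfolding Bp_def by (simp add: Qop_lincomb)
  finally show ?thesis .
qed

abbreviation MM where "MM \<equiv> ff 0"
abbreviation LL where "LL \<equiv> hh (n-1)"

lemma Qop_ff_le: "Qop ff k \<le> (MM - 1) * onev k"
proof (cases "k < n")
  case True
  then show ?thesis using ff_poisson[of k] ff_le_ff0[of k] by (simp add: onev_def)
qed (simp add: Qop_def onev_def)

lemma Qop_ff_ge: "(LL - 1) * onev k \<le> Qop ff k"
proof (cases "k < n")
  case True
  then show ?thesis using ff_poisson[of k] ff_ge_last[of k] by (simp add: onev_def)
qed (simp add: Qop_def onev_def)

lemma Bp_upper: "Bp r N k \<le> (MM - 1)^r * ff k"
proof (induction N arbitrary: r k)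
  case 0
  then show ?case using ff0_ge1 ff_nonneg[of k] by (simp add: Bp_def)
next
  case (Suc N)
  show ?case
  proof (cases r)
    case 0
    have "Qop (Bp 0 N) k \<le> Qop ff k" using Suc.IH[of 0] by (intro Qop_mono) simp
    then show ?thesis using 0 Bp_rec0[of N k] ff_poisson[of k] by simp
  next
    case (Suc r')
    let ?c = "(MM - 1)^r'"
    have c0: "0 \<le> ?c" using ff0_ge1 by simp
    have a: "Qop (Bp (Suc r') N) k \<le> (MM - 1) * ?c * Qop ff k"
      using Suc.IH[of "Suc r'"] Qop_mono[of "Bp (Suc r') N" "\<lambda>k. (MM - 1) * ?c * ff k" k]
      by (simp add: Qop_scale mult.assoc)
    have b: "Qop (Bp r' N) k \<le> ?c * Qop ff k"
      using Suc.IH[of r'] Qop_mono[of "Bp r' N" "\<lambda>k. ?c * ff k" k] by (simp add: Qop_scale)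
    have "?c * Qop ff k \<le> ?c * ((MM - 1) * onev k)"
      using Qop_ff_le[of k] c0 by (rule mult_left_mono)
    then have "Bp (Suc r') (Suc N) k \<le> (MM - 1) * ?c * (onev k + Qop ff k)"
      using a b Bp_recS[of r' N k] by (simp add: algebra_simps)
    then show ?thesis using Suc ff_poisson[of k] by (simp add: mult.commute)
  qed
qed

lemma B_summable: "summable (\<lambda>t. real (t choose r) * w t k)"
  by (rule summableI_nonneg_bounded[where x="(MM - 1)^r * ff k"])
     (use Bp_upper w_nonneg in \<open>auto simp: Bp_def\<close>)

lemma B_upper: "B r k \<le> (MM - 1)^r * ff k"
  unfolding B_def by (rule suminf_le_const[OF B_summable]) (use Bp_upper in \<open>auto simp: Bp_def\<close>)

lemma B_nonneg: "0 \<le> B r k"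
  unfolding B_def by (intro suminf_nonneg B_summable) (simp add: w_nonneg)

lemma B_ge_n: "n \<le> k \<Longrightarrow> B r k = 0"
  by (simp add: B_def w_ge_n)

lemma w_tendsto0: "(\<lambda>t. w t k) \<longlonglongrightarrow> 0"
  using summable_LIMSEQ_zero[OF B_summable[of 0 k]] by simp

lemma B_eq0: "B 0 k = onev k + Qop (B 0) k"
proof -
  have s: "summable (\<lambda>t. w t k)" for k using B_summable[of 0 k] by simp
  have "B 0 k = (\<Sum>t. w t k)" by (simp add: B_def)
  also have "\<dots> = w 0 k + (\<Sum>t. w (Suc t) k)"
    using suminf_split_head[OF s[of k]] by simp
  also have "(\<Sum>t. w (Suc t) k) = (\<Sum>t. Qop (w t) k)" by (simp add: w_Suc)
  also have "\<dots> = Qop (\<lambda>k. \<Sum>t. w t k) k" using Qop_suminf[of w k] s by simp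
  finally show ?thesis by (simp add: w_0 B_def[abs_def])
qed

lemma B_eqS: "B (Suc r) k = Qop (B (Suc r)) k + Qop (B r) k"
proof -
  have s: "summable (\<lambda>t. real (t choose r') * w t k)" for r' k using B_summable .
  have s2: "summable (\<lambda>t. real (t choose r') * w (Suc t) k)" for r' k
    by (rule summable_comparison_test[OF _ s[of r' k]])
       (auto intro!: exI[of _ 0] mult_left_mono w_Suc_le simp: w_nonneg)
  have "B (Suc r) k = (\<Sum>t. real (Suc t choose Suc r) * w (Suc t) k)"
    using suminf_split_head[OF s[of "Suc r" k]] by (simp add: B_def)
  also have "\<dots> = (\<Sum>t. real (t choose Suc r) * w (Suc t) k + real (t choose r) * w (Suc t) k)"
    by (simp add: algebra_simps)
  also have "\<dots> = (\<Sum>t. real (t choose Suc r) * w (Suc t) k) + (\<Sum>t. real (t choose r) * w (Suc t) k)"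
    using suminf_add[OF s2[of "Suc r" k] s2[of r k]] by simp
  also have "(\<Sum>t. real (t choose Suc r) * w (Suc t) k) = (\<Sum>t. Qop (\<lambda>k. real (t choose Suc r) * w t k) k)"
    by (simp add: w_Suc Qop_scale)
  also have "\<dots> = Qop (B (Suc r)) k"
    using Qop_suminf[of "\<lambda>t k. real (t choose Suc r) * w t k" k] s by (simp add: B_def[abs_def])
  also have "(\<Sum>t. real (t choose r) * w (Suc t) k) = (\<Sum>t. Qop (\<lambda>k. real (t choose r) * w t k) k)"
    by (simp add: w_Suc Qop_scale)
  also have "\<dots> = Qop (B r) k"
    using Qop_suminf[of "\<lambda>t k. real (t choose r) * w t k" k] s by (simp add: B_def[abs_def])
  finally show ?thesis .
qed

lemma super_nonneg:
  assumes sup: "\<And>k. Qop D k \<le> D k" and lb: "\<And>k. - K * onev k \<le> D k"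
  shows "0 \<le> D k"
proof -
  have it: "(Qop ^^ N) D k \<le> D k" for N k
  proof (induction N arbitrary: k)
    case (Suc N)
    have "(Qop ^^ Suc N) D k = Qop ((Qop ^^ N) D) k" by simp
    also have "\<dots> \<le> Qop D k" by (intro Qop_mono Suc.IH)
    also have "\<dots> \<le> D k" by (rule sup)
    finally show ?case .
  qed simp
  have lo: "- K * w N k \<le> D k" for N
  proof -
    have e: "(Qop ^^ N) (\<lambda>k. - K * onev k) k = - K * w N k"
      using Qpow_scale[of N "- K" onev] by (simp add: w_def)
    have "(Qop ^^ N) (\<lambda>k. - K * onev k) k \<le> (Qop ^^ N) D k" by (intro Qpow_mono lb)
    then have "- K * w N k \<le> (Qop ^^ N) D k" unfolding e .
    then show ?thesis using it[of N k] by simp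
  qed
  have "(\<lambda>N. - K * w N k) \<longlonglongrightarrow> - K * 0" by (intro tendsto_mult tendsto_const w_tendsto0)
  then show ?thesis using lo by (intro LIMSEQ_le_const2[where X="\<lambda>N. - K * w N k"]) auto
qed

lemma LL_ge1: "1 \<le> LL"
proof -
  let ?q = "1 - p"
  have "?q^n \<le> ?q" using power_decreasing[of 1 n ?q] n1 p0 p1 by simp
  then have "(1 + p) * ?q^n \<le> (1 + p) * ?q" using p0 by (intro mult_left_mono) auto
  also have "\<dots> \<le> 1" by (simp add: algebra_simps)
  finally have "p * ?q^n \<le> 1 - ?q^n" by (simp add: algebra_simps)
  moreover have "0 < p * ?q^n" using p0 p1 by simp
  ultimately show ?thesis unfolding hh_last by simp
qed

lemma B_lower: "(LL - 1)^r * ff k \<le> B r k"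
proof (induction r arbitrary: k)
  case 0
  let ?D = "\<lambda>k. B 0 k - ff k"
  have "0 \<le> ?D k"
  proof (rule super_nonneg[where K = MM])
    fix k
    show "Qop ?D k \<le> ?D k"
      using B_eq0[of k] ff_poisson[of k] by (simp add: Qop_diff)
    show "- MM * onev k \<le> ?D k"
      using B_nonneg[of 0 k] ff_le_ff0[of k] by (cases "k < n") (auto simp: onev_def B_ge_n ff_ge_n)
  qed
  then show ?case by simp
next
  case (Suc r)
  let ?d = "(LL - 1)^Suc r"
  let ?D = "\<lambda>k. B (Suc r) k - ?d * ff k"
  have d0: "0 \<le> (LL - 1)^r" using LL_ge1 by simp
  have "0 \<le> ?D k"
  proof (rule super_nonneg[where K = "?d * MM"])
    fix k
    have q1: "(LL - 1)^r * Qop ff k \<le> Qop (B r) k"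
      using Qop_mono[of "\<lambda>k. (LL - 1)^r * ff k" "B r" k] Suc.IH by (simp add: Qop_scale)
    have q2: "(LL - 1)^r * ((LL - 1) * onev k) \<le> (LL - 1)^r * Qop ff k"
      using Qop_ff_ge[of k] d0 by (rule mult_left_mono)
    have "Qop ?D k = Qop (B (Suc r)) k - ?d * Qop ff k" by (simp add: Qop_diff Qop_scale)
    also have "\<dots> = B (Suc r) k - Qop (B r) k - ?d * (ff k - onev k)"
      using B_eqS[of r k] ff_poisson[of k] by simp
    also have "\<dots> \<le> ?D k" using q1 q2 by (simp add: algebra_simps)
    finally show "Qop ?D k \<le> ?D k" .
    have "?d * ff k \<le> ?d * MM" using ff_le_ff0[of k] LL_ge1 by (intro mult_left_mono) auto
    then show "- (?d * MM) * onev k \<le> ?D k"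
      using B_nonneg[of "Suc r" k]
      by (cases "k < n") (auto simp: onev_def B_ge_n ff_ge_n)
  qed
  then show ?case by simp
qed

end

context ccb begin

abbreviation PP where "PP \<equiv> cc_prob n p"

lemma w00: "w 0 0 = 1" using n1 by (simp add: w_0 onev_def)

lemma PP_0: "PP 0 = 0" by (simp add: cc_prob_def cdf_eq w00)
lemma PP_Suc: "PP (Suc t) = w t 0 - w (Suc t) 0" by (simp add: cc_prob_def cdf_eq)
lemma PP_nonneg: "0 \<le> PP t"
  by (cases t) (auto simp: PP_0 PP_Suc intro: w_Suc_le)

lemma PP_psum: "(\<Sum>t<Suc N. PP t) = 1 - w N 0"
  by (induction N) (simp_all add: PP_0 PP_Suc w00)

lemma PP_sums: "PP sums 1"
proof -
  have "(\<lambda>N. 1 - w N 0) \<longlonglongrightarrow> 1 - 0" by (intro tendsto_diff tendsto_const w_tendsto0)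
  moreover have "(\<lambda>N. (\<Sum>t<Suc N. PP t)) = (\<lambda>N. 1 - w N 0)" by (simp only: PP_psum)
  ultimately have "(\<lambda>N. (\<Sum>t<Suc N. PP t)) \<longlonglongrightarrow> 1" by simp
  then show ?thesis unfolding sums_def by (rule LIMSEQ_imp_Suc)
qed

lemma PP_binom_psum:
  "(\<Sum>t<Suc N. PP t * real (t choose Suc r)) = (\<Sum>t<N. real (t choose r) * w t 0) - real (N choose Suc r) * w N 0"
proof (induction N)
  case 0 then show ?case by (simp add: PP_0)
next
  case (Suc N)
  have "(\<Sum>t<Suc (Suc N). PP t * real (t choose Suc r)) =
        (\<Sum>t<N. real (t choose r) * w t 0) - real (N choose Suc r) * w N 0
        + (w N 0 - w (Suc N) 0) * (real (N choose r) + real (N choose Suc r))"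
    using Suc by (simp add: PP_Suc)
  also have "\<dots> = (\<Sum>t<Suc N. real (t choose r) * w t 0) - real (Suc N choose Suc r) * w (Suc N) 0"
    by (simp add: algebra_simps)
  finally show ?case .
qed

lemma PP_binom_sums: "(\<lambda>t. PP t * real (t choose Suc r)) sums B r 0"
proof -
  have a: "(\<lambda>N. \<Sum>t<N. real (t choose r) * w t 0) \<longlonglongrightarrow> B r 0"
    using summable_sums[OF B_summable[of r 0]] unfolding sums_def B_def .
  have b: "(\<lambda>N. real (N choose Suc r) * w N 0) \<longlonglongrightarrow> 0"
    using summable_LIMSEQ_zero[OF B_summable[of "Suc r" 0]] .
  have e: "(\<lambda>N. \<Sum>t<Suc N. PP t * real (t choose Suc r)) =
     (\<lambda>N. (\<Sum>t<N. real (t choose r) * w t 0) - real (N choose Suc r) * w N 0)"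
    by (simp only: PP_binom_psum)
  have lim: "(\<lambda>N. \<Sum>t<Suc N. PP t * real (t choose Suc r)) \<longlonglongrightarrow> B r 0"
    unfolding e using tendsto_diff[OF a b] unfolding diff_zero .
  show ?thesis unfolding sums_def by (rule LIMSEQ_imp_Suc) (rule lim)
qed

definition Em :: "nat \<Rightarrow> real" where "Em j = (if j = 0 then 1 else B (j - 1) 0)"

lemma PP_choose_sums: "(\<lambda>t. PP t * real (t choose j)) sums Em j"
  by (cases j) (simp_all add: Em_def PP_sums PP_binom_sums)

end

lemma times_choose: "t * (t choose j) = Suc j * (t choose Suc j) + j * (t choose j)"
proof (cases "j \<le> t")
  case True
  have "t = (t - j) + j" using True by simp
  then have "t * (t choose j) = (t - j) * (t choose j) + j * (t choose j)"
    by (metis add_mult_distrib)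
  also have "(t - j) * (t choose j) = Suc j * (t choose Suc j)"
    using binomial_absorb_comp[of t j] binomial_absorption[of j t] by simp
  finally show ?thesis .
qed (simp add: binomial_eq_0)

lemma pow_choose_expand:
  "\<exists>c. \<forall>t::nat. real t ^ r = fact r * real (t choose r) + (\<Sum>j<r. c j * real (t choose j))"
proof (induction r)
  case 0
  show ?case by simp
next
  case (Suc r)
  then obtain c where c: "\<And>t::nat. real t ^ r = fact r * real (t choose r) + (\<Sum>j<r. c j * real (t choose j))"
    by blast
  define c' where "c' j = (if j = r then fact r * real r else 0) + (if 0 < j then c (j-1) * real j else 0)
      + (if j < r then c j * real j else 0)" for j
  have tc: "real t * real (t choose j) = real (Suc j) * real (t choose Suc j) + real j * real (t choose j)" for t j
    using times_choose[of t j] by (metis of_nat_add of_nat_mult)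
  have "real t ^ Suc r = fact (Suc r) * real (t choose Suc r) + (\<Sum>j<Suc r. c' j * real (t choose j))" for t
  proof -
    have "real t ^ Suc r = real t * (fact r * real (t choose r)) + (\<Sum>j<r. c j * (real t * real (t choose j)))"
      by (simp add: c algebra_simps sum_distrib_left)
    also have "\<dots> = fact (Suc r) * real (t choose Suc r) + fact r * real r * real (t choose r)
        + (\<Sum>j<r. c j * real (Suc j) * real (t choose Suc j)) + (\<Sum>j<r. c j * real j * real (t choose j))"
    proof -
      have t1: "real t * (fact r * real (t choose r)) = fact (Suc r) * real (t choose Suc r) + fact r * real r * real (t choose r)"
        using tc[of t r] by (simp add: algebra_simps)
      have t2: "(\<Sum>j<r. c j * (real t * real (t choose j))) = (\<Sum>j<r. c j * real (Suc j) * real (t choose Suc j)) + (\<Sum>j<r. c j * real j * real (t choose j))"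
        unfolding tc by (simp add: algebra_simps sum.distrib)
      show ?thesis unfolding t1 t2 by simp
    qed
    also have "(\<Sum>j<Suc r. c' j * real (t choose j)) = fact r * real r * real (t choose r)
        + (\<Sum>j<r. c j * real (Suc j) * real (t choose Suc j)) + (\<Sum>j<r. c j * real j * real (t choose j))"
    proof -
      have s1: "(\<Sum>j<Suc r. (if j = r then fact r * real r else 0) * real (t choose j)) = fact r * real r * real (t choose r)"
        by (simp add: sum.lessThan_Suc)
      have s2: "(\<Sum>j<Suc r. (if 0 < j then c (j-1) * real j else 0) * real (t choose j)) = (\<Sum>j<r. c j * real (Suc j) * real (t choose Suc j))"
        unfolding sum.lessThan_Suc_shift by simp
      have s3: "(\<Sum>j<Suc r. (if j < r then c j * real j else 0) * real (t choose j)) = (\<Sum>j<r. c j * real j * real (t choose j))"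
        by (simp add: sum.lessThan_Suc)
      have "(\<Sum>j<Suc r. c' j * real (t choose j)) = (\<Sum>j<Suc r. (if j = r then fact r * real r else 0) * real (t choose j))
         + (\<Sum>j<Suc r. (if 0 < j then c (j-1) * real j else 0) * real (t choose j))
         + (\<Sum>j<Suc r. (if j < r then c j * real j else 0) * real (t choose j))"
        unfolding c'_def by (simp only: distrib_right sum.distrib)
      then show ?thesis using s1 s2 s3 by simp
    qed
    ultimately show ?thesis by simp
  qed
  then show ?case by blast
qed

context ccb begin

lemma PP_pow_sums:
  assumes c: "\<And>t::nat. real t ^ r = fact r * real (t choose r) + (\<Sum>j<r. c j * real (t choose j))"
  shows "(\<lambda>t. PP t * real t ^ r) sums (fact r * Em r + (\<Sum>j<r. c j * Em j))"
proof -
  have "(\<lambda>t. fact r * (PP t * real (t choose r)) + (\<Sum>j<r. c j * (PP t * real (t choose j)))) sums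
        (fact r * Em r + (\<Sum>j<r. c j * Em j))"
    by (intro sums_add sums_mult sums_sum PP_choose_sums)
  moreover have "(\<lambda>t. fact r * (PP t * real (t choose r)) + (\<Sum>j<r. c j * (PP t * real (t choose j))))
      = (\<lambda>t. PP t * real t ^ r)"
    by (simp add: c algebra_simps sum_distrib_left)
  ultimately show ?thesis by simp
qed

lemma T_law_integral:
  assumes g: "\<And>t. 0 \<le> g t" and s: "(\<lambda>t. PP t * g t) sums S"
  shows "integral\<^sup>L (T_law n p) g = S"
proof -
  have "integral\<^sup>L (T_law n p) g = integral\<^sup>L (count_space UNIV) (\<lambda>t. PP t *\<^sub>R g t)"
    unfolding T_law_def by (rule integral_density) (auto simp: PP_nonneg)
  also have "\<dots> = integral\<^sup>L (count_space UNIV) (\<lambda>t. PP t * g t)" by simp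
  also have "\<dots> = (\<Sum>t. PP t * g t)"
  proof (rule integral_count_space_nat)
    have "summable (\<lambda>t. PP t * g t)" using s by (rule sums_summable)
    moreover have "norm (PP t * g t) = PP t * g t" for t using g[of t] PP_nonneg[of t] by simp
    ultimately show "integrable (count_space UNIV) (\<lambda>t. PP t * g t)"
      by (simp add: integrable_count_space_nat_iff)
  qed
  also have "\<dots> = S" using s by (rule sums_unique[symmetric])
  finally show ?thesis .
qed

lemma T_law_measure: "(\<lambda>t. PP t * indicator A t) sums measure (T_law n p) A"
proof -
  have sm: "summable (\<lambda>t. PP t * indicator A t)"
    by (rule summable_comparison_test[OF _ sums_summable[OF PP_sums]])
       (auto simp: PP_nonneg indicator_def)
  have "emeasure (T_law n p) A = (\<integral>\<^sup>+ t. ennreal (PP t) * indicator A t \<partial>count_space UNIV)"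
    unfolding T_law_def by (subst emeasure_density) (auto simp: nn_integral_set_ennreal)
  also have "\<dots> = (\<Sum>t. ennreal (PP t) * indicator A t)"
    by (simp only: nn_integral_count_space_nat)
  also have "\<dots> = (\<Sum>t. ennreal (PP t * indicator A t))"
    by (intro arg_cong[where f=suminf] ext) (auto simp: indicator_def)
  also have "\<dots> = ennreal (\<Sum>t. PP t * indicator A t)"
    by (rule suminf_ennreal2[OF _ sm]) (simp add: PP_nonneg)
  finally have "measure (T_law n p) A = (\<Sum>t. PP t * indicator A t)"
    unfolding measure_def by (simp add: PP_nonneg suminf_nonneg[OF sm])
  then show ?thesis using summable_sums[OF sm] by simp
qed

lemma tail_sums: "(\<lambda>t. PP t * indicator {K<..} t) sums w K 0"
proof -
  have "(\<lambda>t. PP (t + Suc K)) sums (1 - (\<Sum>t<Suc K. PP t))"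
    using sums_split_initial_segment[OF PP_sums] .
  then have a: "(\<lambda>t. PP (t + Suc K)) sums w K 0" by (simp only: PP_psum) simp
  have "(\<lambda>t. PP (t + Suc K) * indicator {K<..} (t + Suc K)) sums w K 0"
    using a by simp
  then show ?thesis
    by (subst sums_zero_iff_shift[symmetric, where n="Suc K"]) auto
qed

lemma w_semigroup: "(\<And>k. w s k \<le> c * onev k) \<Longrightarrow> w (t + s) k \<le> c * w t k"
proof -
  assume h: "\<And>k. w s k \<le> c * onev k"
  have "w (t + s) k = (Qop ^^ t) (w s) k" by (simp add: w_add)
  also have "\<dots> \<le> (Qop ^^ t) (\<lambda>k. c * onev k) k" by (intro Qpow_mono h)
  also have "\<dots> = c * w t k" by (simp add: Qpow_scale w_def)
  finally show ?thesis .
qed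

lemma markov: "real (Suc s) * w s k \<le> MM"
proof -
  have "real (Suc s) * w s k = (\<Sum>t<Suc s. w s k)" by simp
  also have "\<dots> \<le> (\<Sum>t<Suc s. w t k)" by (intro sum_mono w_antimono) auto
  also have "\<dots> = (\<Sum>t<Suc s. real (t choose 0) * w t k)" by simp
  also have "\<dots> \<le> B 0 k"
    unfolding B_def using B_summable[of 0 k] by (rule sum_le_suminf) (auto simp: w_nonneg)
  also have "\<dots> \<le> MM" using B_upper[of 0 k] ff_le_ff0[of k] by simp
  finally show ?thesis .
qed

definition s0 :: nat where "s0 = nat \<lceil>2 * MM\<rceil>"

lemma s0_props: "2 * MM \<le> real (Suc s0)" "real s0 \<le> 2 * MM + 1" "1 \<le> s0"
proof -
  have h0: "0 \<le> \<lceil>2 * MM\<rceil>" using ff0_ge1 by simp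
  have e: "real s0 = of_int \<lceil>2 * MM\<rceil>" unfolding s0_def using h0 by simp
  have c: "of_int \<lceil>2 * MM\<rceil> - 1 < 2 * MM" "2 * MM \<le> of_int \<lceil>2 * MM\<rceil>"
    using ceiling_correct[of "2 * MM"] by auto
  show "2 * MM \<le> real (Suc s0)" "real s0 \<le> 2 * MM + 1" using e c by (simp_all, linarith+)
  have "1 \<le> real s0" using e c ff0_ge1 by linarith
  then show "1 \<le> s0" by simp
qed

lemma w_s0: "w s0 k \<le> 1/2 * onev k"
proof (cases "k < n")
  case True
  have "real (Suc s0) * w s0 k \<le> MM" by (rule markov)
  then have "2 * MM * w s0 k \<le> MM"
    using s0_props(1) w_nonneg[of s0 k] by (meson mult_right_mono order_trans)
  then show ?thesis using True ff0_ge1 by (simp add: onev_def)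
qed (simp add: w_ge_n onev_def)

lemma w_geom: "w (m * s0) k \<le> (1/2)^m"
proof (induction m arbitrary: k)
  case 0 then show ?case using w_le1[of 0 k] by (simp add: onev_def split: if_splits)
next
  case (Suc m)
  have "w (Suc m * s0) k = w (m * s0 + s0) k" by (simp add: add.commute)
  also have "\<dots> \<le> 1/2 * w (m * s0) k" by (rule w_semigroup[OF w_s0])
  also have "\<dots> \<le> 1/2 * (1/2)^m" using Suc.IH[of k] by simp
  finally show ?case by simp
qed

lemma w_tail_bound: "w t 0 \<le> (1/2)^(t div s0)"
proof -
  have "(t div s0) * s0 \<le> t" by simp
  then have "w t 0 \<le> w ((t div s0) * s0) 0" by (rule w_antimono)
  also have "\<dots> \<le> (1/2)^(t div s0)" by (rule w_geom)
  finally show ?thesis .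
qed

end

context ccb begin

lemma Em_Suc_lower: "(LL - 1)^r * LL \<le> Em (Suc r)"
proof -
  have "(LL - 1)^r * LL \<le> (LL - 1)^r * ff 0"
    using ff_ge_last[of 0] n1 LL_ge1 by (intro mult_left_mono) auto
  also have "\<dots> \<le> B r 0" by (rule B_lower)
  finally show ?thesis by (simp add: Em_def)
qed

lemma Em_Suc_upper: "Em (Suc r) \<le> (MM - 1)^r * MM"
  using B_upper[of r 0] by (simp add: Em_def)

lemma eLL: "p * (1-p)^n * LL = 1 - (1-p)^n"
proof -
  have "p * (1-p)^n \<noteq> 0" using p0 p1 by simp
  then show ?thesis unfolding hh_last by simp
qed

lemma LL_le_MM: "LL \<le> MM" using ff_ge_last[of 0] n1 by simp

end

lemma ccbI: "1 \<le> n \<Longrightarrow> 0 < p \<Longrightarrow> p < 1 \<Longrightarrow> ccb n p"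
  by (simp add: ccb_def)

definition eN :: "real \<Rightarrow> nat \<Rightarrow> real" where "eN p n = p * (1-p)^n"

context
  fixes p :: real
  assumes p0: "0 < p" and p1: "p < 1"
begin

lemma qpow_lim: "(\<lambda>n. (1-p)^n) \<longlonglongrightarrow> 0"
  using p0 p1 by (intro LIMSEQ_power_zero) simp

lemma eN_lim: "eN p \<longlonglongrightarrow> 0"
  unfolding eN_def using tendsto_mult[OF tendsto_const[of p] qpow_lim] by simp

lemma eN_pos: "0 < eN p n" using p0 p1 by (simp add: eN_def)
lemma eN_le1: "eN p n \<le> 1"
proof -
  have "(1-p)^n \<le> 1" using p0 p1 by (intro power_le_one) auto
  then have "p * (1-p)^n \<le> 1 * 1" using p0 p1 by (intro mult_mono) auto
  then show ?thesis by (simp add: eN_def)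
qed

lemma eLL_lim: "(\<lambda>n. eN p n * ccb.hh n p (n-1)) \<longlonglongrightarrow> 1"
proof -
  have "(\<lambda>n. 1 - (1-p)^n) \<longlonglongrightarrow> 1 - 0" by (intro tendsto_diff tendsto_const qpow_lim)
  moreover have "\<forall>\<^sub>F n in sequentially. 1 - (1-p)^n = eN p n * ccb.hh n p (n-1)"
    using eventually_ge_at_top[of 1]
  proof eventually_elim
    case (elim n)
    show ?case using ccb.eLL[OF ccbI[OF elim p0 p1]] by (simp add: eN_def)
  qed
  ultimately show ?thesis by (simp add: Lim_transform_eventually)
qed

lemma delta_lim: "(\<lambda>n. (1-p) / ((real n - 1) * p) + 4 * (1-p)^2 / ((real n - 1) * p^2)) \<longlonglongrightarrow> 0"
proof (rule LIMSEQ_imp_Suc)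
  have "(\<lambda>m. ((1-p)/p) * (1 / real m) + (4 * (1-p)^2 / p^2) * (1 / real m)) \<longlonglongrightarrow> ((1-p)/p) * 0 + (4 * (1-p)^2 / p^2) * 0"
    by (intro tendsto_add tendsto_mult tendsto_const lim_inverse_n')
  then show "(\<lambda>m. (1-p) / ((real (Suc m) - 1) * p) + 4 * (1-p)^2 / ((real (Suc m) - 1) * p^2)) \<longlonglongrightarrow> 0"
    by (simp add: mult.commute)
qed

lemma eMM_lim: "(\<lambda>n. eN p n * ccb.ff n p 0) \<longlonglongrightarrow> 1"
proof (rule tendsto_sandwich[OF _ _ eLL_lim])
  show "\<forall>\<^sub>F n in sequentially. eN p n * ccb.hh n p (n-1) \<le> eN p n * ccb.ff n p 0"
    using eventually_ge_at_top[of 1]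
    by eventually_elim (intro mult_left_mono ccb.LL_le_MM[OF ccbI[OF _ p0 p1]], auto simp: eN_pos less_imp_le)
  show "\<forall>\<^sub>F n in sequentially. eN p n * ccb.ff n p 0 \<le>
      1 - (1-p)^n + ((1-p) / ((real n - 1) * p) + 4 * (1-p)^2 / ((real n - 1) * p^2))"
    using eventually_ge_at_top[of 3]
  proof eventually_elim
    case (elim n)
    have "1 \<le> n" using elim by simp
    show ?case using ccb.ff0_upper[OF ccbI[OF \<open>1 \<le> n\<close> p0 p1] elim] by (simp add: eN_def add.assoc)
  qed
  have "(\<lambda>n. 1 - (1-p)^n + ((1-p) / ((real n - 1) * p) + 4 * (1-p)^2 / ((real n - 1) * p^2))) \<longlonglongrightarrow> 1 - 0 + 0"
    by (intro tendsto_add tendsto_diff tendsto_const qpow_lim delta_lim)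
  then show "(\<lambda>n. 1 - (1-p)^n + ((1-p) / ((real n - 1) * p) + 4 * (1-p)^2 / ((real n - 1) * p^2))) \<longlonglongrightarrow> 1"
    by simp
qed

lemma Em_lim: "(\<lambda>n. eN p n ^ j * ccb.Em n p j) \<longlonglongrightarrow> 1"
proof (cases j)
  case 0
  have "\<forall>\<^sub>F n in sequentially. 1 = eN p n ^ j * ccb.Em n p j"
    using eventually_ge_at_top[of 1]
  proof eventually_elim
    case (elim n)
    show ?case using ccb.Em_def[OF ccbI[OF elim p0 p1]] 0 by simp
  qed
  then show ?thesis by (rule Lim_transform_eventually[OF tendsto_const])
next
  case (Suc r)
  let ?L = "\<lambda>n. ccb.hh n p (n-1)" and ?M = "\<lambda>n. ccb.ff n p 0"
  have lo: "(\<lambda>n. (eN p n * ?L n - eN p n)^r * (eN p n * ?L n)) \<longlonglongrightarrow> (1 - 0)^r * 1"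
    by (intro tendsto_mult tendsto_power tendsto_diff eLL_lim eN_lim)
  have hi: "(\<lambda>n. (eN p n * ?M n - eN p n)^r * (eN p n * ?M n)) \<longlonglongrightarrow> (1 - 0)^r * 1"
    by (intro tendsto_mult tendsto_power tendsto_diff eMM_lim eN_lim)
  have alg: "(e * X - e)^r * (e * X) = e ^ Suc r * ((X - 1)^r * X)" for e X :: real
  proof -
    have "e * X - e = e * (X - 1)" by (simp add: algebra_simps)
    then have "(e * X - e)^r = e^r * (X - 1)^r" by (simp add: power_mult_distrib)
    then show ?thesis by simp
  qed
  show ?thesis
  proof (rule tendsto_sandwich)
    show "\<forall>\<^sub>F n in sequentially. (eN p n * ?L n - eN p n)^r * (eN p n * ?L n) \<le> eN p n ^ j * ccb.Em n p j"
      using eventually_ge_at_top[of 1]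
    proof eventually_elim
      case (elim n)
      have "(?L n - 1)^r * ?L n \<le> ccb.Em n p (Suc r)" by (rule ccb.Em_Suc_lower[OF ccbI[OF elim p0 p1]])
      then show ?case unfolding alg Suc using eN_pos[of n] by (intro mult_left_mono) auto
    qed
    show "\<forall>\<^sub>F n in sequentially. eN p n ^ j * ccb.Em n p j \<le> (eN p n * ?M n - eN p n)^r * (eN p n * ?M n)"
      using eventually_ge_at_top[of 1]
    proof eventually_elim
      case (elim n)
      have "ccb.Em n p (Suc r) \<le> (?M n - 1)^r * ?M n" by (rule ccb.Em_Suc_upper[OF ccbI[OF elim p0 p1]])
      then show ?case unfolding alg Suc using eN_pos[of n] by (intro mult_left_mono) auto
    qed
  qed (use lo hi in simp_all)
qed

end

lemma exp_half_le2: "exp (1/2 :: real) \<le> 2"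
proof (rule ccontr)
  assume "\<not> ?thesis"
  then have "2 * 2 < exp (1/2 :: real) * exp (1/2)" by (intro mult_strict_mono) auto
  also have "exp (1/2 :: real) * exp (1/2) = exp 1" by (simp flip: exp_add)
  finally show False using exp_le by simp
qed

lemma half_pow_le: "(1/2 :: real)^m \<le> exp (- real m / 2)"
proof -
  have "exp (real m / 2) = exp (1/2) ^ m" by (simp flip: exp_of_nat_mult)
  also have "\<dots> \<le> 2 ^ m" by (intro power_mono exp_half_le2) auto
  finally have "exp (real m / 2) \<le> 2 ^ m" .
  then have "1 / 2 ^ m \<le> 1 / exp (real m / 2)" by (intro divide_left_mono) auto
  then show ?thesis by (simp add: exp_minus power_one_over field_simps)
qed

context ccb begin

definition Mom :: "nat \<Rightarrow> real" where "Mom r = (\<Sum>t. PP t * real t ^ r)"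

lemma Mom_sums: "(\<lambda>t. PP t * real t ^ r) sums Mom r"
proof -
  obtain c where c: "\<And>t::nat. real t ^ r = fact r * real (t choose r) + (\<Sum>j<r. c j * real (t choose j))"
    using pow_choose_expand[of r] by blast
  show ?thesis unfolding Mom_def using PP_pow_sums[OF c] by (simp add: sums_iff)
qed

lemma Mom_eq:
  assumes c: "\<And>t::nat. real t ^ r = fact r * real (t choose r) + (\<Sum>j<r. c j * real (t choose j))"
  shows "Mom r = fact r * Em r + (\<Sum>j<r. c j * Em j)"
  using sums_unique2[OF Mom_sums PP_pow_sums[OF c]] .

lemma int_pow: "integral\<^sup>L (T_law n p) (\<lambda>t. real t ^ r) = Mom r"
  by (rule T_law_integral[OF _ Mom_sums]) simp

lemma int_Y_pow: "integral\<^sup>L (T_law n p) (\<lambda>t. Y_scale n p t ^ r) = (p * (1-p)^n) ^ r * Mom r"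
proof (rule T_law_integral)
  show "0 \<le> Y_scale n p t ^ r" for t using p0 p1 by (simp add: Y_scale_def)
  have "(\<lambda>t. (p * (1-p)^n) ^ r * (PP t * real t ^ r)) sums ((p * (1-p)^n) ^ r * Mom r)"
    by (intro sums_mult Mom_sums)
  then show "(\<lambda>t. PP t * Y_scale n p t ^ r) sums ((p * (1-p)^n) ^ r * Mom r)"
    by (simp add: Y_scale_def power_mult_distrib algebra_simps)
qed

lemma tail_final:
  assumes eM: "p * (1-p)^n * MM \<le> 2" and x0: "0 \<le> x"
  shows "measure (T_law n p) {t. Y_scale n p t > x} \<le> 3 * exp (- (1/10) * x)"
proof -
  let ?e = "p * (1-p)^n"
  let ?A = "{t. Y_scale n p t > x}"
  have e0: "0 < ?e" using p0 p1 by simp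
  have e1: "?e \<le> 1"
  proof -
    have "(1-p)^n \<le> 1" using p0 p1 by (intro power_le_one) auto
    then have "p * (1-p)^n \<le> 1 * 1" using p0 p1 by (intro mult_mono) auto
    then show ?thesis by simp
  qed
  have mA: "(\<lambda>t. PP t * indicator ?A t) sums measure (T_law n p) ?A" by (rule T_law_measure)
  show ?thesis
  proof (cases "x \<le> 1")
    case True
    have "measure (T_law n p) ?A \<le> 1"
      by (rule sums_le[OF _ mA PP_sums]) (auto simp: indicator_def PP_nonneg)
    also have "1 \<le> 3 * exp (-1 :: real)"
      using exp_le by (simp add: exp_minus field_simps)
    also have "exp (-1 :: real) \<le> exp (- (1/10) * x)" using True x0 by simp
    finally show ?thesis by simp
  next
    case False
    define t0 where "t0 = nat \<lfloor>x / ?e\<rfloor>"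
    define m where "m = t0 div s0"
    have fl0: "0 \<le> \<lfloor>x / ?e\<rfloor>" using x0 e0 by simp
    have t0r: "real t0 = of_int \<lfloor>x / ?e\<rfloor>" unfolding t0_def using fl0 by simp
    have sub: "indicator ?A t \<le> (indicator {t0<..} t :: real)" for t
    proof (cases "t \<in> ?A")
      case True
      then have "x < ?e * real t" by (simp add: Y_scale_def)
      then have "x / ?e < real t" using e0 by (simp add: field_simps)
      then have "of_int \<lfloor>x / ?e\<rfloor> < real t" by linarith
      then have "t0 < t" using t0r by linarith
      then show ?thesis by simp
    qed simp
    have "measure (T_law n p) ?A \<le> w t0 0"
      by (rule sums_le[OF _ mA tail_sums]) (use sub PP_nonneg in \<open>auto intro: mult_left_mono\<close>)
    also have "\<dots> \<le> (1/2)^m" unfolding m_def by (rule w_tail_bound)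
    also have "\<dots> \<le> exp (- real m / 2)" by (rule half_pow_le)
    also have "\<dots> \<le> exp (- (1/10) * x + 3/5)"
    proof -
      have "t0 < (m + 1) * s0" unfolding m_def using s0_props(3)
        by (metis add.commute div_mult_mod_eq mod_less_divisor add_less_mono1 mult_Suc less_le_trans not_less_eq_eq le_refl Suc_eq_plus1 le_numeral_extra(4) neq0_conv not_one_le_zero)
      then have a: "real t0 < (real m + 1) * real s0"
        by (metis of_nat_1 of_nat_add of_nat_less_iff of_nat_mult)
      have b: "x / ?e - 1 < real t0" using t0r by linarith
      have es: "?e * real s0 \<le> 5"
      proof -
        have "?e * real s0 \<le> ?e * (2 * MM + 1)" using s0_props(2) e0 by (intro mult_left_mono) auto
        also have "\<dots> = 2 * (?e * MM) + ?e" by (simp add: algebra_simps)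
        also have "\<dots> \<le> 5" using eM e1 by simp
        finally show ?thesis .
      qed
      have "x - ?e < ?e * ((real m + 1) * real s0)"
      proof -
        have "x / ?e - 1 < (real m + 1) * real s0" using a b by linarith
        then have "?e * (x / ?e - 1) < ?e * ((real m + 1) * real s0)" using e0 by (rule mult_strict_left_mono)
        moreover have "\<And>E::real. 0 < E \<Longrightarrow> E * (x / E - 1) = x - E" by (simp add: field_simps)
        ultimately show ?thesis using e0 by metis
      qed
      also have "\<dots> = (real m + 1) * (?e * real s0)" by (simp add: algebra_simps)
      also have "\<dots> \<le> (real m + 1) * 5" using es by (intro mult_left_mono) auto
      finally have "x - 1 < (real m + 1) * 5" using e1 by linarith
      then have "x - 1 < 5 * real m + 5" by (simp add: algebra_simps)
      then have "- real m / 2 \<le> - (1/10) * x + 3/5" by linarith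
      then show ?thesis by simp
    qed
    also have "\<dots> = exp (3/5) * exp (- (1/10) * x)" by (simp flip: exp_add)
    also have "\<dots> \<le> 3 * exp (- (1/10) * x)"
    proof -
      have "exp (3/5 :: real) \<le> exp 1" by simp
      then have "exp (3/5 :: real) \<le> 3" using exp_le by linarith
      then show ?thesis by (intro mult_right_mono) auto
    qed
    finally show ?thesis .
  qed
qed

end


lemma momY_lim:
  assumes p0: "0 < p" and p1: "p < 1" and r1: "1 \<le> r"
  shows "(\<lambda>n. eN p n ^ r * ccb.Mom n p r) \<longlonglongrightarrow> fact r"
proof -
  obtain c where c: "\<And>t::nat. real t ^ r = fact r * real (t choose r) + (\<Sum>j<r. c j * real (t choose j))"
    using pow_choose_expand[of r] by blast
  have "(\<lambda>n. fact r * (eN p n ^ r * ccb.Em n p r) + (\<Sum>j<r. c j * (eN p n ^ (r - j) * (eN p n ^ j * ccb.Em n p j))))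
        \<longlonglongrightarrow> fact r * 1 + (\<Sum>j<r. c j * (0 ^ (r - j) * 1))"
    by (intro tendsto_add tendsto_mult tendsto_const tendsto_sum tendsto_power Em_lim[OF p0 p1] eN_lim[OF p0 p1])
  moreover have "(\<Sum>j<r. c j * (0 ^ (r - j) * (1::real))) = 0"
    by (intro sum.neutral) auto
  ultimately have lim: "(\<lambda>n. fact r * (eN p n ^ r * ccb.Em n p r) + (\<Sum>j<r. c j * (eN p n ^ (r - j) * (eN p n ^ j * ccb.Em n p j))))
        \<longlonglongrightarrow> fact r" by simp
  have "\<forall>\<^sub>F n in sequentially. fact r * (eN p n ^ r * ccb.Em n p r) + (\<Sum>j<r. c j * (eN p n ^ (r - j) * (eN p n ^ j * ccb.Em n p j)))
      = eN p n ^ r * ccb.Mom n p r"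
    using eventually_ge_at_top[of 1]
  proof eventually_elim
    case (elim n)
    have pw: "eN p n ^ (r - j) * (eN p n ^ j * X) = eN p n ^ r * X" if "j < r" for j X
      using that by (simp add: mult.assoc[symmetric] power_add[symmetric])
    have "fact r * (eN p n ^ r * ccb.Em n p r) + (\<Sum>j<r. c j * (eN p n ^ (r - j) * (eN p n ^ j * ccb.Em n p j)))
        = eN p n ^ r * (fact r * ccb.Em n p r + (\<Sum>j<r. c j * ccb.Em n p j))"
    proof -
      have s: "(\<Sum>j<r. c j * (eN p n ^ (r - j) * (eN p n ^ j * ccb.Em n p j))) = (\<Sum>j<r. eN p n ^ r * (c j * ccb.Em n p j))"
        by (rule sum.cong[OF refl]) (auto simp: mult.left_commute power_add[symmetric])
      show ?thesis unfolding s sum_distrib_left[symmetric] by (simp add: algebra_simps)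
    qed
    also have "\<dots> = eN p n ^ r * ccb.Mom n p r"
      using ccb.Mom_eq[OF ccbI[OF elim p0 p1] c] by simp
    finally show ?case .
  qed
  then show ?thesis using lim by (simp add: Lim_transform_eventually)
qed

theorem mainTheorem4:
  fixes p :: real
  assumes "0 < p" and "p < 1"
  shows "(\<exists>C c. 0 < C \<and> 0 < c \<and>
            (\<forall>\<^sub>F n in sequentially. \<forall>x::real. x \<ge> 0 \<longrightarrow>
               measure (T_law n p) {t. Y_scale n p t > x} \<le> C * exp (- c * x)))
       \<and> (\<forall>r::nat. r \<ge> 1 \<longrightarrow>
            (\<lambda>n. integral\<^sup>L (T_law n p) (\<lambda>t. (Y_scale n p t) ^ r)) \<longlonglongrightarrow> fact r)
       \<and> (\<lambda>n. integral\<^sup>L (T_law n p) (\<lambda>t. real t))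
            \<sim>[sequentially] (\<lambda>n. 1 / (p * (1 - p) ^ n))
       \<and> (\<lambda>n. integral\<^sup>L (T_law n p) (\<lambda>t. (real t)\<^sup>2)
                - (integral\<^sup>L (T_law n p) (\<lambda>t. real t))\<^sup>2)
            \<sim>[sequentially] (\<lambda>n. 1 / (p\<^sup>2 * (1 - p) ^ (2 * n)))"
proof (intro conjI allI impI)
  note p0 = assms(1) and p1 = assms(2)
  have ev1: "\<forall>\<^sub>F n in sequentially. 1 \<le> n" by (rule eventually_ge_at_top)
  have ev2: "\<forall>\<^sub>F n in sequentially. eN p n * ccb.ff n p 0 < 2"
    using order_tendstoD(2)[OF eMM_lim[OF p0 p1], of 2] by simp
  have "\<forall>\<^sub>F n in sequentially. \<forall>x::real. x \<ge> 0 \<longrightarrow>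
               measure (T_law n p) {t. Y_scale n p t > x} \<le> 3 * exp (- (1/10) * x)"
    using ev1 ev2
  proof eventually_elim
    case (elim n)
    show ?case using ccb.tail_final[OF ccbI[OF elim(1) p0 p1]] elim(2) by (simp add: eN_def)
  qed
  then show "\<exists>C c. 0 < C \<and> 0 < c \<and>
            (\<forall>\<^sub>F n in sequentially. \<forall>x::real. x \<ge> 0 \<longrightarrow>
               measure (T_law n p) {t. Y_scale n p t > x} \<le> C * exp (- c * x))"
    by (intro exI[of _ 3] exI[of _ "1/10"]) simp
next
  fix r :: nat assume r1: "1 \<le> r"
  have "\<forall>\<^sub>F n in sequentially. eN p n ^ r * ccb.Mom n p r = integral\<^sup>L (T_law n p) (\<lambda>t. (Y_scale n p t) ^ r)"
    using eventually_ge_at_top[of 1]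
  proof eventually_elim
    case (elim n)
    show ?case using ccb.int_Y_pow[OF ccbI[OF elim assms]] by (simp add: eN_def)
  qed
  then show "(\<lambda>n. integral\<^sup>L (T_law n p) (\<lambda>t. (Y_scale n p t) ^ r)) \<longlonglongrightarrow> fact r"
    using momY_lim[OF assms r1] by (simp add: Lim_transform_eventually)
next
  note p0 = assms(1) and p1 = assms(2)
  have m1: "(\<lambda>n. eN p n ^ 1 * ccb.Mom n p 1) \<longlonglongrightarrow> 1" using momY_lim[OF p0 p1, of 1] by simp
  have i1: "\<forall>\<^sub>F n in sequentially. integral\<^sup>L (T_law n p) (\<lambda>t. real t) = ccb.Mom n p 1"
    using eventually_ge_at_top[of 1]
  proof eventually_elim
    case (elim n)
    show ?case using ccb.int_pow[OF ccbI[OF elim p0 p1], of 1] by simp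
  qed
  have "\<forall>\<^sub>F n in sequentially. eN p n ^ 1 * ccb.Mom n p 1 =
        integral\<^sup>L (T_law n p) (\<lambda>t. real t) / (1 / (p * (1 - p) ^ n))"
    using i1 by eventually_elim (simp add: eN_def)
  then have "((\<lambda>n. integral\<^sup>L (T_law n p) (\<lambda>t. real t) / (1 / (p * (1 - p) ^ n))) \<longlongrightarrow> 1) sequentially"
    using m1 by (rule Lim_transform_eventually[rotated])
  then show "(\<lambda>n. integral\<^sup>L (T_law n p) (\<lambda>t. real t)) \<sim>[sequentially] (\<lambda>n. 1 / (p * (1 - p) ^ n))"
    by (rule asymp_equivI')
next
  note p0 = assms(1) and p1 = assms(2)
  have m1: "(\<lambda>n. eN p n ^ 1 * ccb.Mom n p 1) \<longlonglongrightarrow> 1" using momY_lim[OF p0 p1, of 1] by simp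
  have m2: "(\<lambda>n. eN p n ^ 2 * ccb.Mom n p 2) \<longlonglongrightarrow> 2" using momY_lim[OF p0 p1, of 2] by simp
  have lim0: "(\<lambda>n. eN p n ^ 2 * ccb.Mom n p 2 - (eN p n ^ 1 * ccb.Mom n p 1)^2) \<longlonglongrightarrow> 2 - 1^2"
    by (rule tendsto_diff[OF m2 tendsto_power[OF m1]])
  have lim: "(\<lambda>n. eN p n ^ 2 * ccb.Mom n p 2 - (eN p n ^ 1 * ccb.Mom n p 1)^2) \<longlonglongrightarrow> 1"
    using lim0 by simp
  have ev: "\<forall>\<^sub>F n in sequentially. eN p n ^ 2 * ccb.Mom n p 2 - (eN p n ^ 1 * ccb.Mom n p 1)^2 =
        (integral\<^sup>L (T_law n p) (\<lambda>t. (real t)\<^sup>2) - (integral\<^sup>L (T_law n p) (\<lambda>t. real t))\<^sup>2)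
          / (1 / (p\<^sup>2 * (1 - p) ^ (2 * n)))"
    using eventually_ge_at_top[of 1]
  proof eventually_elim
    case (elim n)
    have a: "integral\<^sup>L (T_law n p) (\<lambda>t. real t) = ccb.Mom n p 1"
      using ccb.int_pow[OF ccbI[OF elim p0 p1], of 1] by simp
    have b: "integral\<^sup>L (T_law n p) (\<lambda>t. (real t)\<^sup>2) = ccb.Mom n p 2"
      using ccb.int_pow[OF ccbI[OF elim p0 p1], of 2] by simp
    have g: "\<And>Q A B. 0 < Q \<Longrightarrow> (p * Q)^2 * A - ((p * Q)^1 * B)^2 = (A - B^2) / (1 / (p^2 * Q^2))"
      using p0 by (simp add: power2_eq_square field_simps)
    have q2: "(1 - p) ^ (2 * n) = ((1 - p)^n)^2" by (simp add: power_mult[symmetric] mult.commute)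
    show ?case unfolding a b eN_def q2 using p1 by (intro g) simp
  qed
  have "((\<lambda>n. (integral\<^sup>L (T_law n p) (\<lambda>t. (real t)\<^sup>2) - (integral\<^sup>L (T_law n p) (\<lambda>t. real t))\<^sup>2)
          / (1 / (p\<^sup>2 * (1 - p) ^ (2 * n)))) \<longlongrightarrow> 1) sequentially"
    by (rule Lim_transform_eventually[OF lim ev])
  then show "(\<lambda>n. integral\<^sup>L (T_law n p) (\<lambda>t. (real t)\<^sup>2) - (integral\<^sup>L (T_law n p) (\<lambda>t. real t))\<^sup>2)
            \<sim>[sequentially] (\<lambda>n. 1 / (p\<^sup>2 * (1 - p) ^ (2 * n)))"
    by (rule asymp_equivI')
qed


end
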